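(* Let $\mathfrak{U}$ be a Banach algebra such that $\mathfrak{U}^\sharp$ is symmetrically pseudo-amenable, and let $X$ be a Banach $\mathfrak{U}$-bimodule. Then every bounded central Jordan derivation $D:\mathfrak{U}\to X$ (i.e. $D(\mathfrak{U})\subseteq\mathcal{Z}_{\mathfrak{U}}(X)$) is a derivation.
   Context: $\mathfrak{U}^\sharp=\mathfrak{U}\oplus\mathbb{C}1$ is the unitization of $\mathfrak{U}$ with the $\ell^1$-norm (a unit is adjoined even if $\mathfrak{U}$ is unital). $\mathcal{Z}_{\mathfrak{U}}(X)=\{x\in X: ax=xa \text{ for all } a\in\mathfrak{U}\}$. A linear map $\delta:\mathfrak{U}\to X$ is a derivation if $\delta(ab)=\delta(a)b+a\delta(b)$, and a Jordan derivation if $\delta(ab+ba)=\delta(a)b+a\delta(b)+\delta(b)a+b\delta(a)$, for all $a,b$. For a Banach algebra $\mathfrak{A}$, $\mathfrak{A}\widehat{\otimes}\mathfrak{A}$ is the projective tensor product with $a(b\otimes c)=ab\otimes c$, $(b\otimes c)a=b\otimes ca$, $\pi(b\otimes c)=bc$ (extended linearly and continuously); the flip is $(b\otimes c)^\circ=c\otimes b$ and $\mathbf{t}$ is symmetric if $\mathbf{t}^\circ=\mathbf{t}$. A symmetric approximate diagonal is a net $\{\mathbf{t}_\lambda\}$ (not necessarily bounded) of symmetric elements with $a\mathbf{t}_\lambda-\mathbf{t}_\lambda a\to0$ and $\pi(\mathbf{t}_\lambda)a\to a$ for all $a\in\mathfrak{A}$; $\mathfrak{A}$ is symmetrically pseudo-amenable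 if it has one. *)

theory Defs
  imports "HOL-Analysis.Analysis"
begin

class complex_vector = real_vector +
  fixes scaleC :: "complex \<Rightarrow> 'a \<Rightarrow> 'a"
  assumes scaleC_add_right: "scaleC c (x + y) = scaleC c x + scaleC c y"
    and scaleC_add_left: "scaleC (c + d) x = scaleC c x + scaleC d x"
    and scaleC_scaleC: "scaleC c (scaleC d x) = scaleC (c * d) x"
    and scaleC_one: "scaleC 1 x = x"
    and scaleR_scaleC: "scaleR r x = scaleC (of_real r) x"

class complex_normed_vector = complex_vector + real_normed_vector +
  assumes norm_scaleC: "norm (scaleC c x) = cmod c * norm x"

class complex_normed_algebra = complex_normed_vector + real_normed_algebra +
  assumes scaleC_left_mult: "scaleC c x * y = scaleC c (x * y)"
    and scaleC_right_mult: "x * scaleC c y = scaleC c (x * y)"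

text \<open>A (complex) Banach algebra is a type of class
  complex_normed_algebra and banach (not necessarily unital or commutative).\<close>

definition clinear :: "('a::complex_vector \<Rightarrow> 'b::complex_vector) \<Rightarrow> bool" where
  "clinear f \<longleftrightarrow> (\<forall>x y. f (x + y) = f x + f y) \<and> (\<forall>c x. f (scaleC c x) = scaleC c (f x))"

definition cbounded :: "('a::real_normed_vector \<Rightarrow> 'b::real_normed_vector) \<Rightarrow> bool" where
  "cbounded f \<longleftrightarrow> (\<exists>K. \<forall>x. norm (f x) \<le> K * norm x)"

definition banach_bimodule ::
  "('a::complex_normed_algebra \<Rightarrow> 'x::{complex_normed_vector,banach} \<Rightarrow> 'x)
   \<Rightarrow> ('x \<Rightarrow> 'a \<Rightarrow> 'x) \<Rightarrow> bool" where
  "banach_bimodule lact ract \<longleftrightarrow>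
     (\<forall>a b x. lact (a + b) x = lact a x + lact b x) \<and>
     (\<forall>a x y. lact a (x + y) = lact a x + lact a y) \<and>
     (\<forall>c a x. lact (scaleC c a) x = scaleC c (lact a x)) \<and>
     (\<forall>c a x. lact a (scaleC c x) = scaleC c (lact a x)) \<and>
     (\<forall>a b x. ract x (a + b) = ract x a + ract x b) \<and>
     (\<forall>a x y. ract (x + y) a = ract x a + ract y a) \<and>
     (\<forall>c a x. ract x (scaleC c a) = scaleC c (ract x a)) \<and>
     (\<forall>c a x. ract (scaleC c x) a = scaleC c (ract x a)) \<and>
     (\<forall>a b x. lact a (lact b x) = lact (a * b) x) \<and>
     (\<forall>a b x. ract (ract x a) b = ract x (a * b)) \<and>
     (\<forall>a b x. ract (lact a x) b = lact a (ract x b)) \<and>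
     (\<exists>K. \<forall>a x. norm (lact a x) \<le> K * norm a * norm x \<and> norm (ract x a) \<le> K * norm x * norm a)"

definition centre :: "('a \<Rightarrow> 'x \<Rightarrow> 'x) \<Rightarrow> ('x \<Rightarrow> 'a \<Rightarrow> 'x) \<Rightarrow> 'x set" where
  "centre lact ract = {x. \<forall>a. lact a x = ract x a}"

definition derivation ::
  "('a::complex_normed_algebra \<Rightarrow> 'x \<Rightarrow> 'x) \<Rightarrow> ('x \<Rightarrow> 'a \<Rightarrow> 'x) \<Rightarrow> ('a \<Rightarrow> 'x::complex_vector) \<Rightarrow> bool" where
  "derivation lact ract D \<longleftrightarrow> clinear D \<and>
     (\<forall>a b. D (a * b) = ract (D a) b + lact a (D b))"

definition jordan_derivation ::
  "('a::complex_normed_algebra \<Rightarrow> 'x \<Rightarrow> 'x) \<Rightarrow> ('x \<Rightarrow> 'a \<Rightarrow> 'x) \<Rightarrow> ('a \<Rightarrow> 'x::complex_vector) \<Rightarrow> bool" where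
  "jordan_derivation lact ract D \<longleftrightarrow> clinear D \<and>
     (\<forall>a b. D (a * b + b * a) = ract (D a) b + lact a (D b) + ract (D b) a + lact b (D a))"

section \<open>Unitization U# = U \<oplus> C1 with the l1-norm, modelled on 'a \<times> complex\<close>

definition uadd :: "'a::complex_normed_algebra \<times> complex \<Rightarrow> 'a \<times> complex \<Rightarrow> 'a \<times> complex" where
  "uadd u v = (fst u + fst v, snd u + snd v)"

definition uneg :: "'a::complex_normed_algebra \<times> complex \<Rightarrow> 'a \<times> complex" where
  "uneg u = (- fst u, - snd u)"

definition uscale :: "complex \<Rightarrow> 'a::complex_normed_algebra \<times> complex \<Rightarrow> 'a \<times> complex" where
  "uscale c u = (scaleC c (fst u), c * snd u)"

definition umult :: "'a::complex_normed_algebra \<times> complex \<Rightarrow> 'a \<times> complex \<Rightarrow> 'a \<times> complex" where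
  "umult u v = (fst u * fst v + scaleC (snd u) (fst v) + scaleC (snd v) (fst u), snd u * snd v)"

definition unorm :: "'a::complex_normed_algebra \<times> complex \<Rightarrow> real" where
  "unorm u = norm (fst u) + cmod (snd u)"

text \<open>A list of pairs [(u1,v1),...,(un,vn)] represents the tensor u1\<otimes>v1 + ... + un\<otimes>vn.
  Its image in the free complex vector space on U# \<times> U# is fv; two lists represent the
  same tensor iff the difference of their images lies in the complex span of the
  bilinearity relations (the standard construction of the algebraic tensor product).\<close>

definition fv :: "('u \<times> 'u) list \<Rightarrow> ('u \<times> 'u \<Rightarrow> complex)" where
  "fv L = (\<lambda>p. of_nat (count_list L p))"

definition delta :: "'u \<times> 'u \<Rightarrow> ('u \<times> 'u \<Rightarrow> complex)" where
  "delta p = (\<lambda>q. if q = p then 1 else 0)"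

definition tensor_relations ::
  "(('a::complex_normed_algebra \<times> complex) \<times> ('a \<times> complex) \<Rightarrow> complex) set" where
  "tensor_relations =
     {(\<lambda>q. delta (uadd u u', v) q - delta (u, v) q - delta (u', v) q) | u u' v. True} \<union>
     {(\<lambda>q. delta (u, uadd v v') q - delta (u, v) q - delta (u, v') q) | u v v'. True} \<union>
     {(\<lambda>q. delta (uscale c u, v) q - c * delta (u, v) q) | c u v. True} \<union>
     {(\<lambda>q. delta (u, uscale c v) q - c * delta (u, v) q) | c u v. True}"

definition tensor_eq ::
  "(('a::complex_normed_algebra \<times> complex) \<times> ('a \<times> complex)) list \<Rightarrow> (('a \<times> complex) \<times> ('a \<times> complex)) list \<Rightarrow> bool" where
  "tensor_eq L M \<longleftrightarrow>
     (\<exists>S coef. finite S \<and> S \<subseteq> tensor_relations \<and>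
        (\<forall>q. fv L q - fv M q = (\<Sum>g\<in>S. coef g * g q)))"

definition tcost :: "(('a::complex_normed_algebra \<times> complex) \<times> ('a \<times> complex)) list \<Rightarrow> real" where
  "tcost L = sum_list (map (\<lambda>p. unorm (fst p) * unorm (snd p)) L)"

definition pnorm :: "(('a::complex_normed_algebra \<times> complex) \<times> ('a \<times> complex)) list \<Rightarrow> real" where
  "pnorm L = Inf {tcost M | M. tensor_eq M L}"

text \<open>Every element of the completion is an absolutely convergent series
  \<Sum>n. u_n \<otimes> v_n with \<Sum>n \<parallel>u_n\<parallel>\<parallel>v_n\<parallel> < \<infinity>; we represent it by the sequence
  of pairs.\<close>

type_synonym 'a ctensor = "nat \<Rightarrow> ('a \<times> complex) \<times> ('a \<times> complex)"

definition ctensor_ok :: "'a::complex_normed_algebra ctensor \<Rightarrow> bool" where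
  "ctensor_ok s \<longleftrightarrow> summable (\<lambda>n. unorm (fst (s n)) * unorm (snd (s n)))"

definition cnorm :: "'a::complex_normed_algebra ctensor \<Rightarrow> real" where
  "cnorm s = lim (\<lambda>n. pnorm (map s [0..<n]))"

text \<open>Difference s - s' (as the interleaved series).\<close>
definition cdiff :: "'a::complex_normed_algebra ctensor \<Rightarrow> 'a ctensor \<Rightarrow> 'a ctensor" where
  "cdiff s s' = (\<lambda>n. if even n then s (n div 2)
                     else (uneg (fst (s' (n div 2))), snd (s' (n div 2))))"

definition lmod :: "'a::complex_normed_algebra \<times> complex \<Rightarrow> 'a ctensor \<Rightarrow> 'a ctensor" where
  "lmod a s = (\<lambda>n. (umult a (fst (s n)), snd (s n)))"

definition rmod :: "'a::complex_normed_algebra ctensor \<Rightarrow> 'a \<times> complex \<Rightarrow> 'a ctensor" where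
  "rmod s a = (\<lambda>n. (fst (s n), umult (snd (s n)) a))"

definition cflip :: "'a::complex_normed_algebra ctensor \<Rightarrow> 'a ctensor" where
  "cflip s = (\<lambda>n. (snd (s n), fst (s n)))"

definition csymmetric :: "'a::complex_normed_algebra ctensor \<Rightarrow> bool" where
  "csymmetric s \<longleftrightarrow> cnorm (cdiff (cflip s) s) = 0"

definition cpi :: "'a::complex_normed_algebra ctensor \<Rightarrow> 'a \<times> complex" where
  "cpi s = (\<Sum>n. umult (fst (s n)) (snd (s n)))"

definition directed_set :: "('i \<Rightarrow> 'i \<Rightarrow> bool) \<Rightarrow> bool" where
  "directed_set le \<longleftrightarrow> (\<forall>i. le i i) \<and> (\<forall>i j k. le i j \<longrightarrow> le j k \<longrightarrow> le i k) \<and>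
     (\<forall>i j. \<exists>k. le i k \<and> le j k)"

definition net_to_zero :: "('i \<Rightarrow> 'i \<Rightarrow> bool) \<Rightarrow> ('i \<Rightarrow> real) \<Rightarrow> bool" where
  "net_to_zero le f \<longleftrightarrow> (\<forall>e>0. \<exists>i0. \<forall>i. le i0 i \<longrightarrow> \<bar>f i\<bar> < e)"

definition sym_approx_diag_unitization ::
  "('i \<Rightarrow> 'i \<Rightarrow> bool) \<Rightarrow> ('i \<Rightarrow> 'a::complex_normed_algebra ctensor) \<Rightarrow> bool" where
  "sym_approx_diag_unitization le t \<longleftrightarrow>
     directed_set le \<and>
     (\<forall>i. ctensor_ok (t i) \<and> csymmetric (t i)) \<and>
     (\<forall>a. net_to_zero le (\<lambda>i. cnorm (cdiff (lmod a (t i)) (rmod (t i) a)))) \<and>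
     (\<forall>a. net_to_zero le (\<lambda>i. unorm (uadd (umult (cpi (t i)) a) (uneg a))))"

end

theory Submission
  imports Defs
begin

lemma scaleC_zero_left[simp]: "scaleC 0 (x::'v::complex_vector) = 0"
  using scaleR_scaleC[of 0 x] by simp

lemma scaleC_zero_right[simp]: "scaleC c (0::'v::complex_vector) = 0"
proof -
  have "scaleC c (0::'v) = scaleC c 0 + scaleC c 0" by (metis add.right_neutral scaleC_add_right)
  then show ?thesis by simp
qed

lemma scaleC_minus_left: "scaleC (- c) (x::'v::complex_vector) = - scaleC c x"
proof -
  have "scaleC (-c) x + scaleC c x = 0" by (metis scaleC_add_left add.left_inverse scaleC_zero_left)
  then show ?thesis by (simp add: eq_neg_iff_add_eq_0)
qed

lemma scaleC_minus_right: "scaleC c (- x::'v::complex_vector) = - scaleC c x"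
proof -
  have "scaleC c (-x) + scaleC c x = 0" by (metis scaleC_add_right add.left_inverse scaleC_zero_right)
  then show ?thesis by (simp add: eq_neg_iff_add_eq_0)
qed

lemma scaleC_diff_right: "scaleC c (x - y::'v::complex_vector) = scaleC c x - scaleC c y"
  by (metis diff_conv_add_uminus scaleC_add_right scaleC_minus_right)

lemma scaleC_diff_left: "scaleC (c - d) (x::'v::complex_vector) = scaleC c x - scaleC d x"
  by (metis diff_conv_add_uminus scaleC_add_left scaleC_minus_left)

lemma scaleC_sum_right: "scaleC c (sum f A) = (\<Sum>i\<in>A. scaleC c (f i::'v::complex_vector))"
  by (induction A rule: infinite_finite_induct) (auto simp: scaleC_add_right)

lemma scaleC_sum_left: "scaleC (sum f A) (x::'v::complex_vector) = (\<Sum>i\<in>A. scaleC (f i) x)"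
  by (induction A rule: infinite_finite_induct) (auto simp: scaleC_add_left)

lemma scaleC_of_nat: "scaleC (of_nat n) (x::'v::complex_vector) = of_nat n *\<^sub>R x"
  by (metis of_real_of_nat_eq scaleR_scaleC)

lemma scaleC_half: "scaleC (1/2) (x + x) = (x::'v::complex_vector)"
proof -
  have "scaleC (1/2) (x + x) = scaleC (1/2 + 1/2) x" by (simp only: scaleC_add_right scaleC_add_left)
  then show ?thesis by (simp add: scaleC_one)
qed

context
  fixes lact :: "'a::complex_normed_algebra \<Rightarrow> 'x::{complex_normed_vector,banach} \<Rightarrow> 'x"
    and ract :: "'x \<Rightarrow> 'a \<Rightarrow> 'x"
  assumes bm: "banach_bimodule lact ract"
begin

lemma bmf:
  "lact (a + b) x = lact a x + lact b x"
  "lact a (x + y) = lact a x + lact a y"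
  "lact (scaleC c a) x = scaleC c (lact a x)"
  "lact a (scaleC c x) = scaleC c (lact a x)"
  "ract x (a + b) = ract x a + ract x b"
  "ract (x + y) a = ract x a + ract y a"
  "ract x (scaleC c a) = scaleC c (ract x a)"
  "ract (scaleC c x) a = scaleC c (ract x a)"
  "lact a (lact b x) = lact (a * b) x"
  "ract (ract x a) b = ract x (a * b)"
  "ract (lact a x) b = lact a (ract x b)"
  using bm unfolding banach_bimodule_def by auto

lemma bm_bound: "\<exists>K>0. \<forall>a x. norm (lact a x) \<le> K * norm a * norm x \<and> norm (ract x a) \<le> K * norm x * norm a"
proof -
  obtain K where K: "\<forall>a x. norm (lact a x) \<le> K * norm a * norm x \<and> norm (ract x a) \<le> K * norm x * norm a"
    using bm unfolding banach_bimodule_def by auto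
  show ?thesis
  proof (intro exI conjI allI)
    fix a :: 'a and x :: 'x
    have "K * norm a * norm x \<le> (\<bar>K\<bar> + 1) * norm a * norm x"
      by (intro mult_right_mono) auto
    then show "norm (lact a x) \<le> (\<bar>K\<bar> + 1) * norm a * norm x" using K by (meson order_trans)
    have "K * norm x * norm a \<le> (\<bar>K\<bar> + 1) * norm x * norm a"
      by (intro mult_right_mono) auto
    then show "norm (ract x a) \<le> (\<bar>K\<bar> + 1) * norm x * norm a" using K by (meson order_trans)
  qed simp
qed

lemma add_l1: "Modules.additive (\<lambda>a. lact a x)" by unfold_locales (simp add: bmf)
lemma add_l2: "Modules.additive (\<lambda>x. lact a x)" by unfold_locales (simp add: bmf)
lemma add_r1: "Modules.additive (\<lambda>a. ract x a)" by unfold_locales (simp add: bmf)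
lemma add_r2: "Modules.additive (\<lambda>x. ract x a)" by unfold_locales (simp add: bmf)

lemmas lr_lin = Modules.additive.zero[OF add_l1] Modules.additive.zero[OF add_l2] Modules.additive.zero[OF add_r1] Modules.additive.zero[OF add_r2]
  Modules.additive.minus[OF add_l1] Modules.additive.minus[OF add_l2] Modules.additive.minus[OF add_r1] Modules.additive.minus[OF add_r2]
  Modules.additive.diff[OF add_l1] Modules.additive.diff[OF add_l2] Modules.additive.diff[OF add_r1] Modules.additive.diff[OF add_r2]

lemma centre_diff: "x \<in> centre lact ract \<Longrightarrow> y \<in> centre lact ract \<Longrightarrow> x - y \<in> centre lact ract"
  by (simp add: centre_def lr_lin)
lemma centre_add: "x \<in> centre lact ract \<Longrightarrow> y \<in> centre lact ract \<Longrightarrow> x + y \<in> centre lact ract"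
  by (simp add: centre_def bmf)
lemma centre_scale: "x \<in> centre lact ract \<Longrightarrow> scaleC c x \<in> centre lact ract"
  by (simp add: centre_def bmf)

end


definition EE :: "('a::complex_normed_algebra \<Rightarrow> 'x::complex_vector \<Rightarrow> 'x) \<Rightarrow> ('a \<Rightarrow> 'x) \<Rightarrow> 'a \<Rightarrow> 'a \<Rightarrow> 'x" where
  "EE lact D a b = D (a * b) - lact b (D a) - lact a (D b)"

context
  fixes lact :: "'a::complex_normed_algebra \<Rightarrow> 'x::{complex_normed_vector,banach} \<Rightarrow> 'x"
    and ract :: "'x \<Rightarrow> 'a \<Rightarrow> 'x"
    and D :: "'a \<Rightarrow> 'x"
  assumes bm: "banach_bimodule lact ract"
    and jd: "jordan_derivation lact ract D"
    and cen: "\<forall>a. D a \<in> centre lact ract"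
begin

lemma D_add: "D (x + y) = D x + D y" and D_scale: "D (scaleC c x) = scaleC c (D x)"
  using jd unfolding jordan_derivation_def clinear_def by auto

lemma add_D: "Modules.additive D" by unfold_locales (simp add: D_add)
lemmas D_lin = Modules.additive.zero[OF add_D] Modules.additive.minus[OF add_D] Modules.additive.diff[OF add_D] D_add

lemma D_jordan: "D (a * b + b * a) = ract (D a) b + lact a (D b) + ract (D b) a + lact b (D a)"
  using jd unfolding jordan_derivation_def by auto

lemma cenD: "ract (D a) c = lact c (D a)"
  using cen unfolding centre_def by auto

lemmas bmf' = bmf[OF bm] lr_lin[OF bm]

lemma E_anti: "EE lact D a b + EE lact D b a = 0"
proof -
  have "D (a * b) + D (b * a) = lact b (D a) + lact a (D b) + lact a (D b) + lact b (D a)"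
    using D_jordan[of a b] by (simp add: D_add cenD)
  then show ?thesis unfolding EE_def by (simp add: algebra_simps)
qed

lemma E_twice: "EE lact D a b + EE lact D a b = D (a * b) - D (b * a)"
proof -
  have "EE lact D b a = - EE lact D a b" using E_anti[of a b] by (simp add: eq_neg_iff_add_eq_0 add.commute)
  moreover have "EE lact D a b - EE lact D b a = D (a * b) - D (b * a)" unfolding EE_def by (simp add: algebra_simps)
  ultimately show ?thesis by simp
qed

lemma E_cent: "EE lact D a b \<in> centre lact ract"
proof -
  have "D (a * b) - D (b * a) \<in> centre lact ract" using cen by (intro centre_diff[OF bm]) auto
  then have "scaleC (1/2) (D (a * b) - D (b * a)) \<in> centre lact ract" by (rule centre_scale[OF bm])
  then show ?thesis by (simp add: E_twice[symmetric] scaleC_half)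
qed

lemma cenE: "ract (EE lact D a b) c = lact c (EE lact D a b)"
  using E_cent unfolding centre_def by auto

lemma E_cocycle: "lact a (EE lact D b c) - EE lact D (a * b) c + EE lact D a (b * c) - ract (EE lact D a b) c = 0"
  unfolding EE_def by (simp add: bmf' cenD mult.assoc algebra_simps)

lemma E_cyclic: "EE lact D (a * b) c + EE lact D (b * c) a + EE lact D (c * a) b = 0"
proof -
  let ?S = "EE lact D (a * b) c + EE lact D (b * c) a + EE lact D (c * a) b"
  have "?S + ?S = (EE lact D (a * b) c + EE lact D (a * b) c) + (EE lact D (b * c) a + EE lact D (b * c) a)
     + (EE lact D (c * a) b + EE lact D (c * a) b)" by (simp add: algebra_simps)
  also have "\<dots> = 0" unfolding E_twice by (simp add: mult.assoc)
  finally have "?S + ?S = 0" .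
  then have "scaleC (1/2) (?S + ?S) = 0" by simp
  then show ?thesis by (simp only: scaleC_half)
qed

lemma E_der: "EE lact D (c * a) b = ract (EE lact D c b) a + lact c (EE lact D a b)"
proof -
  have 1: "EE lact D (c * a) b = - EE lact D (a * b) c - EE lact D (b * c) a"
    using E_cyclic[of a b c] by (simp add: algebra_simps eq_neg_iff_add_eq_0)
  have 2: "EE lact D (b * c) a = - EE lact D a (b * c)"
    using E_anti[of "b * c" a] by (simp add: algebra_simps eq_neg_iff_add_eq_0)
  have 3: "EE lact D b c = - EE lact D c b"
    using E_anti[of b c] by (simp add: algebra_simps eq_neg_iff_add_eq_0)
  have "EE lact D (c * a) b = EE lact D a (b * c) - EE lact D (a * b) c" using 1 2 by simp
  also have "\<dots> = ract (EE lact D a b) c - lact a (EE lact D b c)"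
    using E_cocycle[of a b c] by (simp add: algebra_simps)
  also have "\<dots> = lact c (EE lact D a b) + lact a (EE lact D c b)"
    by (simp add: cenE 3 bmf')
  also have "\<dots> = ract (EE lact D c b) a + lact c (EE lact D a b)"
    by (simp add: cenE)
  finally show ?thesis .
qed

end


section \<open>Bilinear maps on the tensor product\<close>

definition balg :: "(('a::complex_normed_algebra \<times> complex) \<Rightarrow> ('a \<times> complex) \<Rightarrow> 'x::complex_vector) \<Rightarrow> bool" where
  "balg B \<longleftrightarrow> (\<forall>u u' v. B (uadd u u') v = B u v + B u' v) \<and> (\<forall>u v v'. B u (uadd v v') = B u v + B u v')
     \<and> (\<forall>c u v. B (uscale c u) v = scaleC c (B u v)) \<and> (\<forall>c u v. B u (uscale c v) = scaleC c (B u v))"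

definition bil :: "(('a::complex_normed_algebra \<times> complex) \<Rightarrow> ('a \<times> complex) \<Rightarrow> 'x::complex_normed_vector) \<Rightarrow> real \<Rightarrow> bool" where
  "bil B K \<longleftrightarrow> balg B \<and> K > 0 \<and> (\<forall>u v. norm (B u v) \<le> K * unorm u * unorm v)"

definition Bl :: "(('a::complex_normed_algebra \<times> complex) \<Rightarrow> ('a \<times> complex) \<Rightarrow> 'x::complex_vector) \<Rightarrow> (('a \<times> complex) \<times> ('a \<times> complex)) list \<Rightarrow> 'x" where
  "Bl B L = sum_list (map (\<lambda>p. B (fst p) (snd p)) L)"

definition Bt :: "(('a::complex_normed_algebra \<times> complex) \<Rightarrow> ('a \<times> complex) \<Rightarrow> 'x::complex_normed_vector) \<Rightarrow> 'a ctensor \<Rightarrow> 'x" where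
  "Bt B s = (\<Sum>n. B (fst (s n)) (snd (s n)))"

lemma balgD:
  assumes "balg B"
  shows "B (uadd u u') v = B u v + B u' v" "B u (uadd v v') = B u v + B u v'"
    "B (uscale c u) v = scaleC c (B u v)" "B u (uscale c v) = scaleC c (B u v)"
  using assms unfolding balg_def by blast+

lemma bilD: assumes "bil B K"
  shows "norm (B u v) \<le> K * unorm u * unorm v" "K > 0" "balg B"
  using assms unfolding bil_def by blast+

lemma fv_Nil[simp]: "fv [] q = 0" by (simp add: fv_def)
lemma fv_Cons: "fv (x # L) q = fv L q + delta x q" by (simp add: fv_def delta_def)
lemma fv_append: "fv (L @ M) q = fv L q + fv M q"
  by (induction L) (simp_all add: fv_Cons algebra_simps)

lemma delta_sum: "finite F \<Longrightarrow> p \<in> F \<Longrightarrow> (\<Sum>q\<in>F. scaleC (delta p q) (h q :: 'v::complex_vector)) = h p"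
proof -
  assume F: "finite F" "p \<in> F"
  have "(\<Sum>q\<in>F. scaleC (delta p q) (h q)) = (\<Sum>q\<in>F. if q = p then h q else 0)"
    by (intro sum.cong) (auto simp: delta_def scaleC_one)
  also have "\<dots> = h p" using F by (simp add: sum.delta')
  finally show ?thesis .
qed

lemma Bl_Nil[simp]: "Bl B [] = 0" by (simp add: Bl_def)
lemma Bl_Cons: "Bl B (x # L) = B (fst x) (snd x) + Bl B L" by (simp add: Bl_def)
lemma Bl_append: "Bl B (L @ M) = Bl B L + Bl B M" by (simp add: Bl_def)

lemma Bl_fv: "finite F \<Longrightarrow> set L \<subseteq> F \<Longrightarrow> Bl B L = (\<Sum>q\<in>F. scaleC (fv L q) (B (fst q) (snd q)))"
proof (induction L)
  case Nil then show ?case by simp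
next
  case (Cons x L)
  have "(\<Sum>q\<in>F. scaleC (fv (x # L) q) (B (fst q) (snd q)))
      = (\<Sum>q\<in>F. scaleC (fv L q) (B (fst q) (snd q))) + (\<Sum>q\<in>F. scaleC (delta x q) (B (fst q) (snd q)))"
    by (simp add: fv_Cons scaleC_add_left sum.distrib)
  also have "\<dots> = Bl B L + B (fst x) (snd x)" using Cons by (simp add: delta_sum)
  finally show ?case by (simp add: Bl_Cons)
qed

lemma rel_zero:
  assumes B: "balg B" and g: "g \<in> tensor_relations"
  shows "\<exists>P. finite P \<and> (\<forall>F. finite F \<longrightarrow> P \<subseteq> F \<longrightarrow> (\<Sum>q\<in>F. scaleC (g q) (B (fst q) (snd q))) = 0)"
proof -
  let ?h = "\<lambda>q. B (fst q) (snd q)"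
  have three: "(\<Sum>q\<in>F. scaleC (delta p1 q - delta p2 q - delta p3 q) (?h q)) = ?h p1 - ?h p2 - ?h p3"
    if "finite F" "{p1, p2, p3} \<subseteq> F" for F p1 p2 p3
    using that by (simp add: scaleC_diff_left sum_subtractf delta_sum)
  have two: "(\<Sum>q\<in>F. scaleC (delta p1 q - c * delta p2 q) (?h q)) = ?h p1 - scaleC c (?h p2)"
    if "finite F" "{p1, p2} \<subseteq> F" for F p1 p2 c
    using that by (simp add: scaleC_diff_left sum_subtractf delta_sum scaleC_scaleC[symmetric] scaleC_sum_right[symmetric])
  from g show ?thesis unfolding tensor_relations_def
  proof (elim UnE CollectE exE conjE)
    fix u u' v assume "g = (\<lambda>q. delta (uadd u u', v) q - delta (u, v) q - delta (u', v) q)"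
    then show ?thesis
      by (intro exI[of _ "{(uadd u u', v), (u, v), (u', v)}"]) (simp add: three balgD[OF B])
  next
    fix u v v' assume "g = (\<lambda>q. delta (u, uadd v v') q - delta (u, v) q - delta (u, v') q)"
    then show ?thesis
      by (intro exI[of _ "{(u, uadd v v'), (u, v), (u, v')}"]) (simp add: three balgD[OF B])
  next
    fix c u v assume "g = (\<lambda>q. delta (uscale c u, v) q - c * delta (u, v) q)"
    then show ?thesis
      by (intro exI[of _ "{(uscale c u, v), (u, v)}"]) (simp add: two balgD[OF B])
  next
    fix c u v assume "g = (\<lambda>q. delta (u, uscale c v) q - c * delta (u, v) q)"
    then show ?thesis
      by (intro exI[of _ "{(u, uscale c v), (u, v)}"]) (simp add: two balgD[OF B])
  qed
qed





definition goodP :: "((('a::complex_normed_algebra \<times> complex) \<times> ('a \<times> complex)) \<Rightarrow> 'x::complex_vector) \<Rightarrow> ((('a \<times> complex) \<times> ('a \<times> complex)) \<Rightarrow> complex) \<Rightarrow> (('a \<times> complex) \<times> ('a \<times> complex)) set \<Rightarrow> bool" where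
  "goodP h g P \<longleftrightarrow> finite P \<and> (\<forall>F. finite F \<longrightarrow> P \<subseteq> F \<longrightarrow> (\<Sum>q\<in>F. scaleC (g q) (h q)) = 0)"

lemma Bl_eq:
  assumes B: "balg B" and te: "tensor_eq M L"
  shows "Bl B M = Bl B L"
proof -
  define h where "h = (\<lambda>q. B (fst q) (snd q))"
  obtain S coef where S: "finite S" "S \<subseteq> tensor_relations" "\<forall>q. fv M q - fv L q = (\<Sum>g\<in>S. coef g * g q)"
    using te unfolding tensor_eq_def by blast
  have "\<forall>g\<in>S. \<exists>P. goodP h g P"
    using rel_zero[OF B] S(2) unfolding goodP_def h_def by blast
  then obtain P where P: "\<forall>g\<in>S. goodP h g (P g)"
    by (rule bchoice[THEN exE]) 
  define F where "F = set M \<union> set L \<union> \<Union>(P ` S)"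
  have fin: "finite F" unfolding F_def using S(1) P by (auto simp: goodP_def)
  have e1: "Bl B M = (\<Sum>q\<in>F. scaleC (fv M q) (h q))" unfolding h_def using fin by (intro Bl_fv) (auto simp: F_def)
  have e2: "Bl B L = (\<Sum>q\<in>F. scaleC (fv L q) (h q))" unfolding h_def using fin by (intro Bl_fv) (auto simp: F_def)
  have "Bl B M - Bl B L = (\<Sum>q\<in>F. scaleC (fv M q - fv L q) (h q))"
    unfolding e1 e2 by (simp only: scaleC_diff_left sum_subtractf)
  also have "\<dots> = (\<Sum>q\<in>F. \<Sum>g\<in>S. scaleC (coef g) (scaleC (g q) (h q)))"
    by (intro sum.cong refl) (simp only: S(3) scaleC_sum_left scaleC_scaleC)
  also have "\<dots> = (\<Sum>g\<in>S. \<Sum>q\<in>F. scaleC (coef g) (scaleC (g q) (h q)))"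
    by (rule sum.swap)
  also have "\<dots> = (\<Sum>g\<in>S. scaleC (coef g) (\<Sum>q\<in>F. scaleC (g q) (h q)))"
    by (simp only: scaleC_sum_right)
  also have "\<dots> = 0"
  proof (intro sum.neutral ballI)
    fix g assume "g \<in> S"
    then have "P g \<subseteq> F" unfolding F_def by auto
    with P \<open>g \<in> S\<close> fin show "scaleC (coef g) (\<Sum>q\<in>F. scaleC (g q) (h q)) = 0" by (simp add: goodP_def)
  qed
  finally show ?thesis by simp
qed



lemma unorm_nonneg: "0 \<le> unorm u" by (simp add: unorm_def)

lemma tcost_Cons: "tcost (x # L) = unorm (fst x) * unorm (snd x) + tcost L" by (simp add: tcost_def)
lemma tcost_append: "tcost (L @ M) = tcost L + tcost M" by (simp add: tcost_def)
lemma tcost_nonneg: "0 \<le> tcost L"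
  by (induction L) (simp_all add: tcost_Cons unorm_nonneg tcost_def[of "[]"])

lemma Bl_norm: "bil B K \<Longrightarrow> norm (Bl B L) \<le> K * tcost L"
proof (induction L)
  case Nil then show ?case by (simp add: tcost_def)
next
  case (Cons x L)
  have "norm (Bl B (x # L)) \<le> norm (B (fst x) (snd x)) + norm (Bl B L)"
    by (simp add: Bl_Cons norm_triangle_ineq)
  also have "\<dots> \<le> K * unorm (fst x) * unorm (snd x) + K * tcost L"
    using Cons bilD[OF Cons.prems] by (intro add_mono) auto
  finally show ?case by (simp add: tcost_Cons algebra_simps)
qed

lemma tensor_eq_refl: "tensor_eq L L"
  unfolding tensor_eq_def by (intro exI[of _ "{}"]) auto

lemma tensor_eq_append: "tensor_eq M L \<Longrightarrow> tensor_eq (M @ N) (L @ N)"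
  unfolding tensor_eq_def by (simp add: fv_append)

lemma pnorm_set_ne: "{tcost M |M. tensor_eq M L} \<noteq> {}"
  using tensor_eq_refl by blast

lemma pnorm_set_bdd: "bdd_below {tcost M |M. tensor_eq M L}"
  by (rule bdd_belowI[of _ 0]) (auto simp: tcost_nonneg)

lemma pnorm_nonneg: "0 \<le> pnorm L"
  unfolding pnorm_def using pnorm_set_ne by (intro cInf_greatest) (auto simp: tcost_nonneg)

lemma pnorm_le: "tensor_eq M L \<Longrightarrow> pnorm L \<le> tcost M"
  unfolding pnorm_def using pnorm_set_bdd by (intro cInf_lower) auto

lemma pnorm_append: "pnorm (L @ N) \<le> pnorm L + tcost N"
proof -
  have "pnorm (L @ N) - tcost N \<le> pnorm L"
    unfolding pnorm_def[of L]
  proof (rule cInf_greatest[OF pnorm_set_ne])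
    fix r assume "r \<in> {tcost M |M. tensor_eq M L}"
    then obtain M where M: "r = tcost M" "tensor_eq M L" by blast
    have "pnorm (L @ N) \<le> tcost (M @ N)" using pnorm_le[OF tensor_eq_append[OF M(2)]] .
    then show "pnorm (L @ N) - tcost N \<le> r" using M by (simp add: tcost_append)
  qed
  then show ?thesis by simp
qed

lemma Bl_le_pnorm:
  assumes "bil B K" shows "norm (Bl B L) \<le> K * pnorm L"
proof -
  have K: "K > 0" and B: "balg B" using assms unfolding bil_def by auto
  have "norm (Bl B L) / K \<le> pnorm L"
    unfolding pnorm_def
  proof (rule cInf_greatest[OF pnorm_set_ne])
    fix r assume "r \<in> {tcost M |M. tensor_eq M L}"
    then obtain M where M: "r = tcost M" "tensor_eq M L" by blast
    have "norm (Bl B L) \<le> K * tcost M" using Bl_norm[OF assms, of M] Bl_eq[OF B M(2)] by simp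
    then show "norm (Bl B L) / K \<le> r" using M K by (simp add: divide_le_eq mult.commute)
  qed
  then show ?thesis using K by (simp add: divide_le_eq mult.commute)
qed



lemma Bl_map_upt: "Bl B (map s [0..<N]) = (\<Sum>n<N. B (fst (s n)) (snd (s n)))"
  by (induction N) (simp_all add: Bl_append Bl_Cons)

lemma cnorm_lim:
  assumes ok: "ctensor_ok s"
  shows "(\<lambda>N. pnorm (map s [0..<N])) \<longlonglongrightarrow> cnorm s"
proof -
  define c where "c n = unorm (fst (s n)) * unorm (snd (s n))" for n
  have sc: "summable c" using ok unfolding ctensor_ok_def c_def by simp
  have c0: "0 \<le> c n" for n unfolding c_def by (simp add: unorm_nonneg)
  define x where "x N = pnorm (map s [0..<N])" for N
  define y where "y N = x N + (suminf c - (\<Sum>n<N. c n))" for N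
  have step: "x (Suc N) \<le> x N + c N" for N
  proof -
    have "x (Suc N) = pnorm (map s [0..<N] @ [s N])" by (simp add: x_def)
    also have "\<dots> \<le> x N + tcost [s N]" unfolding x_def by (rule pnorm_append)
    finally show ?thesis by (simp add: tcost_def c_def)
  qed
  have dec: "decseq y" unfolding decseq_Suc_iff
  proof
    fix N show "y (Suc N) \<le> y N" using step[of N] by (simp add: y_def)
  qed
  have y0: "\<forall>i. 0 \<le> y i"
  proof
    fix i
    have "(\<Sum>n<i. c n) \<le> suminf c" using sc c0 by (intro sum_le_suminf) auto
    moreover have "0 \<le> x i" by (simp add: x_def pnorm_nonneg)
    ultimately show "0 \<le> y i" by (simp add: y_def)
  qed
  obtain Ly where Ly: "y \<longlonglongrightarrow> Ly" using decseq_convergent[OF dec y0] by blast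
  have t: "(\<lambda>N. suminf c - (\<Sum>n<N. c n)) \<longlonglongrightarrow> suminf c - suminf c"
    by (intro tendsto_diff tendsto_const summable_LIMSEQ sc)
  have "(\<lambda>N. y N - (suminf c - (\<Sum>n<N. c n))) \<longlonglongrightarrow> Ly - (suminf c - suminf c)"
    by (intro tendsto_diff Ly t)
  then have "x \<longlonglongrightarrow> Ly" by (simp add: y_def)
  then have "convergent x" by (auto simp: convergent_def)
  then have "x \<longlonglongrightarrow> lim x" by (simp add: convergent_LIMSEQ_iff)
  moreover have "x = (\<lambda>N. pnorm (map s [0..<N]))" by (rule ext) (simp add: x_def)
  ultimately show ?thesis by (simp add: cnorm_def)
qed

lemma Bt_summable:
  fixes B :: "'a::complex_normed_algebra \<times> complex \<Rightarrow> 'a \<times> complex \<Rightarrow> 'x::{complex_normed_vector,banach}"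
  assumes B: "bil B K" and ok: "ctensor_ok s"
  shows "summable (\<lambda>n. B (fst (s n)) (snd (s n)))"
proof (rule summable_comparison_test)
  show "summable (\<lambda>n. K * (unorm (fst (s n)) * unorm (snd (s n))))"
    using ok unfolding ctensor_ok_def by (intro summable_mult)
  show "\<exists>N. \<forall>n\<ge>N. norm (B (fst (s n)) (snd (s n))) \<le> K * (unorm (fst (s n)) * unorm (snd (s n)))"
    using bilD(1)[OF B] by (auto simp: mult.assoc)
qed

lemma Bt_bound:
  fixes B :: "'a::complex_normed_algebra \<times> complex \<Rightarrow> 'a \<times> complex \<Rightarrow> 'x::{complex_normed_vector,banach}"
  assumes B: "bil B K" and ok: "ctensor_ok s"
  shows "norm (Bt B s) \<le> K * cnorm s"
proof -
  have P: "(\<lambda>N. Bl B (map s [0..<N])) \<longlonglongrightarrow> Bt B s"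
    unfolding Bl_map_upt Bt_def by (rule summable_LIMSEQ[OF Bt_summable[OF B ok]])
  show ?thesis
  proof (rule LIMSEQ_le[OF tendsto_norm[OF P] tendsto_mult_left[OF cnorm_lim[OF ok]]])
    show "\<exists>N. \<forall>n\<ge>N. norm (Bl B (map s [0..<n])) \<le> K * pnorm (map s [0..<n])"
      using Bl_le_pnorm[OF B] by blast
  qed
qed



lemma unorm_uneg[simp]: "unorm (uneg u) = unorm u" by (simp add: unorm_def uneg_def)

lemma uneg_uscale: "uneg u = uscale (-1) u"
  by (simp add: uneg_def uscale_def scaleC_minus_left scaleC_one)

lemma balg_uneg: "balg B \<Longrightarrow> B (uneg u) v = - B u v"
  by (simp add: uneg_uscale balgD scaleC_minus_left scaleC_one)

lemma unorm_umult: "unorm (umult u v) \<le> unorm u * unorm v"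
proof -
  obtain x \<mu> where u: "u = (x, \<mu>)" by (cases u)
  obtain y \<nu> where v: "v = (y, \<nu>)" by (cases v)
  have "norm (x * y + scaleC \<mu> y + scaleC \<nu> x) \<le> norm (x * y) + norm (scaleC \<mu> y) + norm (scaleC \<nu> x)"
    by (meson norm_triangle_le norm_triangle_ineq add_mono order_refl)
  also have "\<dots> \<le> norm x * norm y + cmod \<mu> * norm y + cmod \<nu> * norm x"
    by (simp add: norm_scaleC norm_mult_ineq)
  finally have "norm (x * y + scaleC \<mu> y + scaleC \<nu> x) \<le> norm x * norm y + cmod \<mu> * norm y + cmod \<nu> * norm x" .
  then show ?thesis unfolding u v unorm_def umult_def by (simp add: norm_mult algebra_simps)
qed

lemma sum_interleave: "(\<Sum>i<2*(n::nat). f i) = (\<Sum>k<n. f (2*k) + f (2*k+1))"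
  by (induction n) (simp_all add: algebra_simps)

lemma summable_interleave_nonneg:
  fixes f :: "nat \<Rightarrow> real"
  assumes f0: "\<And>i. 0 \<le> f i" and se: "summable (\<lambda>k. f (2*k))" and so: "summable (\<lambda>k. f (2*k+1))"
  shows "summable f"
proof (rule summableI_nonneg_bounded[OF f0])
  fix n
  have "(\<Sum>i<n. f i) \<le> (\<Sum>i<2*n. f i)" using f0 by (intro sum_mono2) auto
  also have "\<dots> = (\<Sum>k<n. f (2*k) + f (2*k+1))" by (rule sum_interleave)
  also have "\<dots> \<le> (\<Sum>k. f (2*k) + f (2*k+1))"
    using f0 by (intro sum_le_suminf summable_add se so) auto
  finally show "(\<Sum>i<n. f i) \<le> (\<Sum>k. f (2*k) + f (2*k+1))" .
qed

lemma suminf_interleave: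
  fixes f :: "nat \<Rightarrow> 'v::real_normed_vector"
  assumes "summable f"
  shows "suminf f = (\<Sum>k. f (2*k) + f (2*k+1))"
proof -
  have "(\<lambda>n. sum f {n*2..<n*2+2}) sums suminf f" by (rule sums_group) (use assms in auto)
  moreover have "sum f {n*2..<n*2+2} = f (2*n) + f (2*n+1)" for n
    by (simp add: numeral_2_eq_2 mult.commute)
  ultimately show ?thesis by (simp add: sums_unique)
qed

lemma cdiff_even[simp]: "cdiff s s' (2*k) = s k" by (simp add: cdiff_def)
lemma cdiff_odd[simp]: "cdiff s s' (Suc (2*k)) = (uneg (fst (s' k)), snd (s' k))" by (simp add: cdiff_def)

lemma summable_real_le:
  fixes f g :: "nat \<Rightarrow> real"
  assumes "\<And>n. 0 \<le> f n" "\<And>n. f n \<le> g n" "summable g"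
  shows "summable f"
  by (rule summable_comparison_test[OF _ assms(3)]) (use assms in auto)

lemma ok_cdiff: "ctensor_ok s \<Longrightarrow> ctensor_ok s' \<Longrightarrow> ctensor_ok (cdiff s s')"
  unfolding ctensor_ok_def
  by (rule summable_interleave_nonneg) (simp_all add: unorm_nonneg)

lemma ok_cflip: "ctensor_ok s \<Longrightarrow> ctensor_ok (cflip s)"
  unfolding ctensor_ok_def cflip_def by (simp add: mult.commute)

lemma ok_lmod: "ctensor_ok s \<Longrightarrow> ctensor_ok (lmod a s)"
  unfolding ctensor_ok_def
proof (rule summable_real_le)
  assume "summable (\<lambda>n. unorm (fst (s n)) * unorm (snd (s n)))"
  then show "summable (\<lambda>n. unorm a * (unorm (fst (s n)) * unorm (snd (s n))))" by (rule summable_mult)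
  fix n
  show "0 \<le> unorm (fst (lmod a s n)) * unorm (snd (lmod a s n))" by (simp add: unorm_nonneg)
  show "unorm (fst (lmod a s n)) * unorm (snd (lmod a s n)) \<le> unorm a * (unorm (fst (s n)) * unorm (snd (s n)))"
    using unorm_umult[of a "fst (s n)"] unfolding lmod_def
    by (simp add: mult.assoc[symmetric] mult_right_mono unorm_nonneg)
qed

lemma ok_rmod: "ctensor_ok s \<Longrightarrow> ctensor_ok (rmod s a)"
  unfolding ctensor_ok_def
proof (rule summable_real_le)
  assume "summable (\<lambda>n. unorm (fst (s n)) * unorm (snd (s n)))"
  then show "summable (\<lambda>n. unorm a * (unorm (fst (s n)) * unorm (snd (s n))))" by (rule summable_mult)
  fix n
  show "0 \<le> unorm (fst (rmod s a n)) * unorm (snd (rmod s a n))" by (simp add: unorm_nonneg)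
  have "unorm (fst (s n)) * unorm (umult (snd (s n)) a) \<le> unorm (fst (s n)) * (unorm (snd (s n)) * unorm a)"
    using unorm_umult[of "snd (s n)" a] by (simp add: mult_left_mono unorm_nonneg)
  then show "unorm (fst (rmod s a n)) * unorm (snd (rmod s a n)) \<le> unorm a * (unorm (fst (s n)) * unorm (snd (s n)))"
    unfolding rmod_def by (simp add: algebra_simps)
qed

lemma Bt_cdiff:
  fixes B :: "'a::complex_normed_algebra \<times> complex \<Rightarrow> 'a \<times> complex \<Rightarrow> 'x::{complex_normed_vector,banach}"
  assumes B: "bil B K" and ok: "ctensor_ok s" "ctensor_ok s'"
  shows "Bt B (cdiff s s') = Bt B s - Bt B s'"
proof -
  have "Bt B (cdiff s s') = (\<Sum>k. B (fst (s k)) (snd (s k)) - B (fst (s' k)) (snd (s' k)))"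
    unfolding Bt_def
    by (subst suminf_interleave[OF Bt_summable[OF B ok_cdiff[OF ok]]])
       (simp add: balg_uneg[OF bilD(3)[OF B]])
  also have "\<dots> = Bt B s - Bt B s'"
    unfolding Bt_def by (rule suminf_diff[symmetric]) (intro Bt_summable[OF B] ok)+
  finally show ?thesis .
qed

lemma Bt_cflip: "Bt B (cflip s) = Bt (\<lambda>u v. B v u) s"
  by (simp add: Bt_def cflip_def)



definition Lu :: "('a::complex_normed_algebra \<Rightarrow> 'x::complex_vector \<Rightarrow> 'x) \<Rightarrow> 'a \<times> complex \<Rightarrow> 'x \<Rightarrow> 'x" where
  "Lu lact u x = lact (fst u) x + scaleC (snd u) x"

definition Ru :: "('x::complex_vector \<Rightarrow> 'a::complex_normed_algebra \<Rightarrow> 'x) \<Rightarrow> 'x \<Rightarrow> 'a \<times> complex \<Rightarrow> 'x" where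
  "Ru ract x u = ract x (fst u) + scaleC (snd u) x"

context
  fixes lact :: "'a::complex_normed_algebra \<Rightarrow> 'x::{complex_normed_vector,banach} \<Rightarrow> 'x"
    and ract :: "'x \<Rightarrow> 'a \<Rightarrow> 'x"
  assumes bm: "banach_bimodule lact ract"
begin

lemmas bmf2 = bmf[OF bm] lr_lin[OF bm]

lemma Lu_mult: "Lu lact u (Lu lact v x) = Lu lact (umult u v) x"
  by (simp add: Lu_def umult_def bmf2 scaleC_add_right scaleC_add_left scaleC_scaleC algebra_simps)

lemma Ru_mult: "Ru ract (Ru ract x u) v = Ru ract x (umult u v)"
  by (simp add: Ru_def umult_def bmf2 scaleC_add_right scaleC_add_left scaleC_scaleC algebra_simps)

lemma Ru_Lu: "Ru ract (Lu lact u x) v = Lu lact u (Ru ract x v)"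
  by (simp add: Ru_def Lu_def bmf2 scaleC_add_right scaleC_scaleC algebra_simps)

lemma Lu_add2: "Lu lact u (x + y) = Lu lact u x + Lu lact u y"
  by (simp add: Lu_def bmf2 scaleC_add_right)
lemma Ru_add1: "Ru ract (x + y) u = Ru ract x u + Ru ract y u"
  by (simp add: Ru_def bmf2 scaleC_add_right)
lemma Lu_add1: "Lu lact (uadd u v) x = Lu lact u x + Lu lact v x"
  by (simp add: Lu_def uadd_def bmf2 scaleC_add_left)
lemma Ru_add2: "Ru ract x (uadd u v) = Ru ract x u + Ru ract x v"
  by (simp add: Ru_def uadd_def bmf2 scaleC_add_left)
lemma Lu_scale1: "Lu lact (uscale c u) x = scaleC c (Lu lact u x)"
  by (simp add: Lu_def uscale_def bmf2 scaleC_add_right scaleC_scaleC)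
lemma Lu_scale2: "Lu lact u (scaleC c x) = scaleC c (Lu lact u x)"
  by (simp add: Lu_def bmf2 scaleC_add_right scaleC_scaleC mult.commute)
lemma Ru_scale2: "Ru ract x (uscale c u) = scaleC c (Ru ract x u)"
  by (simp add: Ru_def uscale_def bmf2 scaleC_add_right scaleC_scaleC)
lemma Ru_scale1: "Ru ract (scaleC c x) u = scaleC c (Ru ract x u)"
  by (simp add: Ru_def bmf2 scaleC_add_right scaleC_scaleC mult.commute)

lemma add_Lu: "Modules.additive (Lu lact u)" by unfold_locales (rule Lu_add2)
lemma add_Ru: "Modules.additive (\<lambda>x. Ru ract x u)" by unfold_locales (rule Ru_add1)
lemmas LuRu_lin = Modules.additive.diff[OF add_Lu] Modules.additive.diff[OF add_Ru]
  Modules.additive.minus[OF add_Lu] Modules.additive.minus[OF add_Ru]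
  Modules.additive.zero[OF add_Lu] Modules.additive.zero[OF add_Ru]

lemma Ru_centre: "x \<in> centre lact ract \<Longrightarrow> Ru ract x u = Lu lact u x"
  by (simp add: Ru_def Lu_def centre_def)

lemma mod_bound: "\<exists>K>0. \<forall>u x. norm (Lu lact u x) \<le> K * unorm u * norm x \<and> norm (Ru ract x u) \<le> K * unorm u * norm x"
proof -
  obtain K where K: "K > 0" "\<forall>a x. norm (lact a x) \<le> K * norm a * norm x \<and> norm (ract x a) \<le> K * norm x * norm a"
    using bm_bound[OF bm] by blast
  have "norm (Lu lact u x) \<le> (K + 1) * unorm u * norm x \<and> norm (Ru ract x u) \<le> (K + 1) * unorm u * norm x" for u x
  proof -
    have a: "K * norm (fst u) * norm x \<le> (K + 1) * norm (fst u) * norm x"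
      by (intro mult_right_mono) auto
    have b0: "cmod (snd u) \<le> (K + 1) * cmod (snd u)"
      using K(1) mult_nonneg_nonneg[of K "cmod (snd u)"] by (simp add: distrib_right)
    have b: "cmod (snd u) * norm x \<le> (K + 1) * cmod (snd u) * norm x"
      using b0 by (intro mult_right_mono) auto
    have "norm (Lu lact u x) \<le> norm (lact (fst u) x) + cmod (snd u) * norm x"
      unfolding Lu_def by (metis norm_scaleC norm_triangle_ineq)
    also have "\<dots> \<le> (K + 1) * unorm u * norm x"
      using K(2) a b unfolding unorm_def by (smt (verit, best) distrib_left distrib_right)
    finally have 1: "norm (Lu lact u x) \<le> (K + 1) * unorm u * norm x" .
    have "norm (Ru ract x u) \<le> norm (ract x (fst u)) + cmod (snd u) * norm x"
      unfolding Ru_def by (metis norm_scaleC norm_triangle_ineq)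
    also have "\<dots> \<le> (K + 1) * unorm u * norm x"
      using K(2) a b unfolding unorm_def by (smt (verit, best) distrib_left distrib_right mult.commute mult.left_commute)
    finally show ?thesis using 1 by simp
  qed
  then show ?thesis using K(1) by (intro exI[of _ "K + 1"]) auto
qed

lemma unorm_le_norm: "unorm u \<le> 2 * norm u"
  unfolding unorm_def using norm_fst_le[of "fst u" "snd u"] norm_snd_le[of "snd u" "fst u"] by simp

lemma bl_Lu2: "bounded_linear (Lu lact u)"
proof -
  obtain K where K: "K > 0" "\<forall>u x. norm (Lu lact u x) \<le> K * unorm u * norm x" using mod_bound by blast
  show ?thesis
  proof (rule bounded_linear_intro[where K = "K * unorm u"])
    show "Lu lact u (x + y) = Lu lact u x + Lu lact u y" for x y by (rule Lu_add2)
    show "Lu lact u (r *\<^sub>R x) = r *\<^sub>R Lu lact u x" for r x by (simp add: scaleR_scaleC Lu_scale2)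
    show "norm (Lu lact u x) \<le> norm x * (K * unorm u)" for x
    proof -
      have "norm (Lu lact u x) \<le> K * unorm u * norm x" using K(2) by blast
      then show ?thesis by (simp add: algebra_simps)
    qed
  qed
qed

lemma bl_Ru1: "bounded_linear (\<lambda>x. Ru ract x u)"
proof -
  obtain K where K: "K > 0" "\<forall>u x. norm (Ru ract x u) \<le> K * unorm u * norm x" using mod_bound by blast
  show ?thesis
  proof (rule bounded_linear_intro[where K = "K * unorm u"])
    show "Ru ract (x + y) u = Ru ract x u + Ru ract y u" for x y by (rule Ru_add1)
    show "Ru ract (r *\<^sub>R x) u = r *\<^sub>R Ru ract x u" for r x by (simp add: scaleR_scaleC Ru_scale1)
    show "norm (Ru ract x u) \<le> norm x * (K * unorm u)" for x
    proof -
      have "norm (Ru ract x u) \<le> K * unorm u * norm x" using K(2) by blast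
      then show ?thesis by (simp add: algebra_simps)
    qed
  qed
qed

lemma bl_Lu1: "bounded_linear (\<lambda>u. Lu lact u x)"
proof -
  obtain K where K: "K > 0" "\<forall>u x. norm (Lu lact u x) \<le> K * unorm u * norm x" using mod_bound by blast
  show ?thesis
  proof (rule bounded_linear_intro[where K = "2 * K * norm x"])
    show "Lu lact (u + v) x = Lu lact u x + Lu lact v x" for u v
    proof -
      have "u + v = uadd u v" by (simp add: uadd_def prod_eq_iff)
      then show ?thesis using Lu_add1[of u v x] by simp
    qed
    show "Lu lact (r *\<^sub>R u) x = r *\<^sub>R Lu lact u x" for r u
      using Lu_scale1[of "of_real r" u x] by (simp add: scaleR_scaleC uscale_def scaleR_prod_def scaleR_conv_of_real)
    show "norm (Lu lact u x) \<le> norm u * (2 * K * norm x)" for u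
    proof -
      have "norm (Lu lact u x) \<le> K * unorm u * norm x" using K(2) by blast
      also have "\<dots> \<le> K * (2 * norm u) * norm x"
        using K(1) unorm_le_norm[of u] by (intro mult_right_mono mult_left_mono) auto
      finally show ?thesis by (simp add: algebra_simps)
    qed
  qed
qed

lemma Lu_one_close: "\<exists>C>0. \<forall>p x. norm (Lu lact p x - x) \<le> C * unorm (uadd (umult p (0, 1)) (uneg (0, 1))) * norm x"
proof -
  obtain K where K: "K > 0" "\<forall>u x. norm (Lu lact u x) \<le> K * unorm u * norm x" using mod_bound by blast
  have "norm (Lu lact p x - x) \<le> K * unorm (uadd (umult p (0, 1)) (uneg (0, 1))) * norm x" for p x
  proof -
    have e: "uadd (umult p (0, 1)) (uneg (0, 1)) = (fst p, snd p - 1)"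
      by (simp add: uadd_def umult_def uneg_def scaleC_one)
    have "Lu lact p x - x = Lu lact (fst p, snd p - 1) x"
      by (simp add: Lu_def scaleC_diff_left scaleC_one)
    then show ?thesis using K(2) e by simp
  qed
  then show ?thesis using K(1) by blast
qed

end



lemma norm_le_unorm: "norm w \<le> unorm w"
  using norm_Pair_le[of "fst w" "snd w"] by (simp add: unorm_def)

lemma cpi_summable:
  fixes s :: "'a::{complex_normed_algebra,banach} ctensor"
  assumes ok: "ctensor_ok s"
  shows "summable (\<lambda>n. umult (fst (s n)) (snd (s n)))"
proof (rule summable_comparison_test)
  show "summable (\<lambda>n. unorm (fst (s n)) * unorm (snd (s n)))" using ok unfolding ctensor_ok_def .
  show "\<exists>N. \<forall>n\<ge>N. norm (umult (fst (s n)) (snd (s n))) \<le> unorm (fst (s n)) * unorm (snd (s n))"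
  proof (intro exI allI impI)
    fix n :: nat
    show "norm (umult (fst (s n)) (snd (s n))) \<le> unorm (fst (s n)) * unorm (snd (s n))"
      using norm_le_unorm[of "umult (fst (s n)) (snd (s n))"] unorm_umult[of "fst (s n)" "snd (s n)"] by linarith
  qed
qed

lemma Bt_zero:
  fixes B :: "'a::complex_normed_algebra \<times> complex \<Rightarrow> 'a \<times> complex \<Rightarrow> 'x::{complex_normed_vector,banach}"
  assumes B: "bil B K" and ok: "ctensor_ok m" and sym: "csymmetric m" and anti: "\<And>u v. B v u = - B u v"
  shows "Bt B m = 0"
proof -
  have fl: "(\<lambda>u v. B v u) = (\<lambda>u v. - B u v)" by (intro ext) (rule anti)
  have "Bt B (cflip m) = Bt (\<lambda>u v. - B u v) m" by (simp only: Bt_cflip fl)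
  also have "\<dots> = - Bt B m" unfolding Bt_def by (rule suminf_minus[OF Bt_summable[OF B ok, unfolded Bt_def]])
  finally have f: "Bt B (cflip m) = - Bt B m" .
  have "norm (Bt B (cdiff (cflip m) m)) \<le> K * cnorm (cdiff (cflip m) m)"
    by (rule Bt_bound[OF B ok_cdiff[OF ok_cflip[OF ok] ok]])
  also have "\<dots> = 0" using sym unfolding csymmetric_def by simp
  finally have "Bt B (cdiff (cflip m) m) = 0" by simp
  then have "Bt B m + Bt B m = 0"
    unfolding Bt_cdiff[OF B ok_cflip[OF ok] ok] f by (metis add.inverse_inverse diff_conv_add_uminus add.commute neg_eq_iff_add_eq_0 eq_iff_diff_eq_0)
  then have "scaleC (1/2) (Bt B m + Bt B m) = 0" by simp
  then show ?thesis by (simp only: scaleC_half)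
qed

definition BB :: "('a::complex_normed_algebra \<Rightarrow> 'x::complex_vector \<Rightarrow> 'x) \<Rightarrow> ('x \<Rightarrow> 'a \<Rightarrow> 'x) \<Rightarrow> ('a \<Rightarrow> 'x) \<Rightarrow> 'a \<times> complex \<Rightarrow> 'a \<times> complex \<Rightarrow> 'x" where
  "BB lact ract d u v = Lu lact u (d (fst v)) - Ru ract (d (fst u)) v"

context
  fixes lact :: "'a::{complex_normed_algebra,banach} \<Rightarrow> 'x::{complex_normed_vector,banach} \<Rightarrow> 'x"
    and ract :: "'x \<Rightarrow> 'a \<Rightarrow> 'x"
    and d :: "'a \<Rightarrow> 'x"
  assumes bm: "banach_bimodule lact ract"
    and d_add: "\<And>x y. d (x + y) = d x + d y"
    and d_scale: "\<And>c x. d (scaleC c x) = scaleC c (d x)"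
    and d_bnd: "\<exists>Kd. \<forall>x. norm (d x) \<le> Kd * norm x"
    and d_cen: "\<And>x. d x \<in> centre lact ract"
    and d_der: "\<And>x y. d (x * y) = ract (d x) y + lact x (d y)"
begin

lemmas mods = Lu_mult[OF bm] Ru_mult[OF bm] Ru_Lu[OF bm] Lu_add2[OF bm] Ru_add1[OF bm]
  Lu_add1[OF bm] Ru_add2[OF bm] Lu_scale1[OF bm] Lu_scale2[OF bm] Ru_scale1[OF bm] Ru_scale2[OF bm]
  LuRu_lin[OF bm]

lemma dd_mult: "d (fst (umult u v)) = Ru ract (d (fst u)) v + Lu lact u (d (fst v))"
  by (simp add: umult_def d_add d_scale d_der Lu_def Ru_def algebra_simps)

lemma fst_uadd: "fst (uadd u v) = fst u + fst v" by (simp add: uadd_def)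
lemma fst_uscale: "fst (uscale c u) = scaleC c (fst u)" by (simp add: uscale_def)

lemma BB_balg: "balg (BB lact ract d)"
  unfolding balg_def BB_def
  by (simp add: mods fst_uadd fst_uscale d_add d_scale scaleC_diff_right)

lemma BB_bil: "\<exists>K. bil (BB lact ract d) K"
proof -
  obtain Km where Km: "Km > 0" "\<forall>u x. norm (Lu lact u x) \<le> Km * unorm u * norm x \<and> norm (Ru ract x u) \<le> Km * unorm u * norm x"
    using mod_bound[OF bm] by blast
  obtain Kd where Kd: "\<forall>x. norm (d x) \<le> Kd * norm x" using d_bnd by blast
  define K' where "K' = \<bar>Kd\<bar> + 1"
  have K'0: "K' > 0" unfolding K'_def by simp
  have dK: "norm (d (fst u)) \<le> K' * unorm u" for u
  proof -
    have "norm (d (fst u)) \<le> Kd * norm (fst u)" using Kd by blast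
    also have "\<dots> \<le> K' * unorm u" unfolding K'_def unorm_def
      by (intro mult_mono) auto
    finally show ?thesis .
  qed
  have "norm (BB lact ract d u v) \<le> (2 * Km * K') * unorm u * unorm v" for u v
  proof -
    have "norm (BB lact ract d u v) \<le> norm (Lu lact u (d (fst v))) + norm (Ru ract (d (fst u)) v)"
      unfolding BB_def by (rule norm_triangle_ineq4)
    also have "\<dots> \<le> Km * unorm u * norm (d (fst v)) + Km * unorm v * norm (d (fst u))"
      using Km(2) by (intro add_mono) blast+
    also have "\<dots> \<le> Km * unorm u * (K' * unorm v) + Km * unorm v * (K' * unorm u)"
      using Km(1) dK by (intro add_mono mult_left_mono) (auto simp: unorm_nonneg)
    also have "\<dots> = (2 * Km * K') * unorm u * unorm v" by (simp add: algebra_simps)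
    finally show ?thesis .
  qed
  then show ?thesis unfolding bil_def using BB_balg Km(1) K'0 by (intro exI[of _ "2 * Km * K'"]) auto
qed

lemma BB_term: "BB lact ract d (umult a u) v - BB lact ract d u (umult v a)
   = Lu lact a (BB lact ract d u v) - Ru ract (BB lact ract d u v) a
     - Lu lact (umult u v) (d (fst a)) - Ru ract (d (fst a)) (umult u v)"
  unfolding BB_def dd_mult by (simp add: mods algebra_simps)

lemma BB_anti: "BB lact ract d v u = - BB lact ract d u v"
  unfolding BB_def by (simp add: Ru_centre[OF bm d_cen])


lemma key_bound:
  assumes B: "bil (BB lact ract d) K" and ok: "ctensor_ok m" and sym: "csymmetric m"
  shows "norm (Lu lact (cpi m) (d (fst a)) + Lu lact (cpi m) (d (fst a))) \<le> K * cnorm (cdiff (lmod a m) (rmod m a))"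
proof -
  let ?B = "BB lact ract d"
  let ?b = "\<lambda>n. ?B (fst (m n)) (snd (m n))"
  let ?p = "\<lambda>n. umult (fst (m n)) (snd (m n))"
  let ?\<xi> = "d (fst a)"
  define g where "g = (\<lambda>u. Lu lact u ?\<xi> + Lu lact u ?\<xi>)"
  have blg: "bounded_linear g" unfolding g_def by (intro bounded_linear_add bl_Lu1[OF bm])
  have z: "Bt ?B m = 0" by (rule Bt_zero[OF B ok sym BB_anti])
  have sb: "summable ?b" by (rule Bt_summable[OF B ok])
  have sp: "summable ?p" by (rule cpi_summable[OF ok])
  have s1: "summable (\<lambda>n. Lu lact a (?b n))" by (rule bounded_linear.summable[OF bl_Lu2[OF bm] sb])
  have s2: "summable (\<lambda>n. Ru ract (?b n) a)" by (rule bounded_linear.summable[OF bl_Ru1[OF bm] sb])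
  have s3: "summable (\<lambda>n. g (?p n))" by (rule bounded_linear.summable[OF blg sp])
  have "Bt ?B (cdiff (lmod a m) (rmod m a)) = Bt ?B (lmod a m) - Bt ?B (rmod m a)"
    by (rule Bt_cdiff[OF B ok_lmod[OF ok] ok_rmod[OF ok]])
  also have "\<dots> = (\<Sum>n. ?B (umult a (fst (m n))) (snd (m n)) - ?B (fst (m n)) (umult (snd (m n)) a))"
  proof -
    have sl: "summable (\<lambda>n. ?B (umult a (fst (m n))) (snd (m n)))"
      using Bt_summable[OF B ok_lmod[OF ok], of a] by (simp add: lmod_def)
    have sr: "summable (\<lambda>n. ?B (fst (m n)) (umult (snd (m n)) a))"
      using Bt_summable[OF B ok_rmod[OF ok], of a] by (simp add: rmod_def)
    show ?thesis unfolding Bt_def lmod_def rmod_def using suminf_diff[OF sl sr] by simp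
  qed
  also have "\<dots> = (\<Sum>n. (Lu lact a (?b n) - Ru ract (?b n) a) - g (?p n))"
  proof (rule suminf_cong)
    fix n
    show "?B (umult a (fst (m n))) (snd (m n)) - ?B (fst (m n)) (umult (snd (m n)) a)
        = (Lu lact a (?b n) - Ru ract (?b n) a) - g (?p n)"
      unfolding BB_term g_def Ru_centre[OF bm d_cen] by (simp only: diff_diff_eq add.assoc)
  qed
  also have "\<dots> = (\<Sum>n. Lu lact a (?b n)) - (\<Sum>n. Ru ract (?b n) a) - (\<Sum>n. g (?p n))"
    using s1 s2 s3 by (simp add: suminf_diff summable_diff)
  also have "\<dots> = Lu lact a (Bt ?B m) - Ru ract (Bt ?B m) a - g (cpi m)"
    unfolding Bt_def cpi_def
    by (simp add: bounded_linear.suminf[OF bl_Lu2[OF bm] sb] bounded_linear.suminf[OF bl_Ru1[OF bm] sb]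
        bounded_linear.suminf[OF blg sp])
  also have "\<dots> = - g (cpi m)" by (simp add: z LuRu_lin[OF bm])
  finally have e: "Bt ?B (cdiff (lmod a m) (rmod m a)) = - g (cpi m)" .
  have "norm (Bt ?B (cdiff (lmod a m) (rmod m a))) \<le> K * cnorm (cdiff (lmod a m) (rmod m a))"
    by (rule Bt_bound[OF B ok_cdiff[OF ok_lmod[OF ok] ok_rmod[OF ok]]])
  then show ?thesis unfolding e norm_minus_cancel g_def .
qed

lemma d_zero:
  fixes le :: "'i \<Rightarrow> 'i \<Rightarrow> bool" and t :: "'i \<Rightarrow> 'a ctensor"
  assumes sad: "sym_approx_diag_unitization le t"
  shows "d x = 0"
proof -
  obtain K where B: "bil (BB lact ract d) K" using BB_bil by blast
  have K0: "K > 0" using bilD(2)[OF B] .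
  obtain C where C: "C > 0" "\<forall>p y. norm (Lu lact p y - y) \<le> C * unorm (uadd (umult p (0, 1)) (uneg (0, 1))) * norm y"
    using Lu_one_close[OF bm] by blast
  define a :: "'a \<times> complex" where "a = (x, 0)"
  have xi: "d (fst a) = d x" by (simp add: a_def)
  have dir: "directed_set le" and okt: "\<And>i. ctensor_ok (t i)" and symt: "\<And>i. csymmetric (t i)"
    and comm: "net_to_zero le (\<lambda>i. cnorm (cdiff (lmod a (t i)) (rmod (t i) a)))"
    and app: "net_to_zero le (\<lambda>i. unorm (uadd (umult (cpi (t i)) (0, 1)) (uneg (0, 1))))"
    using sad unfolding sym_approx_diag_unitization_def by blast+
  have "norm (d x) \<le> 0 + e" if e: "e > 0" for e
  proof -
    have eK: "e / K > 0" using e K0 by simp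
    obtain i1 where i1: "\<forall>i. le i1 i \<longrightarrow> \<bar>cnorm (cdiff (lmod a (t i)) (rmod (t i) a))\<bar> < e / K"
      using comm[unfolded net_to_zero_def, rule_format, OF eK] by blast
    have C2: "1 / (2 * C) > 0" using C(1) by simp
    obtain i2 where i2: "\<forall>i. le i2 i \<longrightarrow> \<bar>unorm (uadd (umult (cpi (t i)) (0, 1)) (uneg (0, 1)))\<bar> < 1 / (2 * C)"
      using app[unfolded net_to_zero_def, rule_format, OF C2] by blast
    obtain k where k: "le i1 k" "le i2 k" using dir unfolding directed_set_def by blast
    define p where "p = cpi (t k)"
    define y where "y = Lu lact p (d x)"
    have "norm (y + y) \<le> K * cnorm (cdiff (lmod a (t k)) (rmod (t k) a))"
      using key_bound[OF B okt[of k] symt[of k], of a] unfolding y_def p_def xi .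
    also have "\<dots> \<le> K * (e / K)" using i1 k(1) K0 by (intro mult_left_mono) auto
    also have "\<dots> = e" using K0 by simp
    finally have ny0: "norm (y + y) \<le> e" .
    have "y + y = scaleR 2 y" by (simp add: scaleR_2)
    then have ny: "2 * norm y \<le> e" using ny0 by simp
    have "norm (y - d x) \<le> C * unorm (uadd (umult p (0, 1)) (uneg (0, 1))) * norm (d x)"
      using C(2) unfolding y_def by blast
    also have "\<dots> \<le> C * (1 / (2 * C)) * norm (d x)"
      using i2 k(2) C(1) unfolding p_def by (intro mult_right_mono mult_left_mono) auto
    also have "\<dots> = norm (d x) / 2" using C(1) by simp
    finally have "norm (y - d x) \<le> norm (d x) / 2" .
    moreover have "norm (d x) \<le> norm y + norm (y - d x)"
      using norm_triangle_sub[of "d x" y] norm_minus_commute[of "d x" y] by simp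
    ultimately show ?thesis using ny by simp
  qed
  then have "norm (d x) \<le> 0" by (rule field_le_epsilon)
  then show ?thesis by simp
qed

end



theorem theorem5p3:
  fixes le :: "'i \<Rightarrow> 'i \<Rightarrow> bool"
    and t :: "'i \<Rightarrow> 'a::{complex_normed_algebra, banach} ctensor"
    and lact :: "'a \<Rightarrow> 'x::{complex_normed_vector, banach} \<Rightarrow> 'x"
    and ract :: "'x \<Rightarrow> 'a \<Rightarrow> 'x"
    and D :: "'a \<Rightarrow> 'x"
  assumes "sym_approx_diag_unitization le t"
    and "banach_bimodule lact ract"
    and "jordan_derivation lact ract D"
    and "cbounded D"
    and "\<forall>a. D a \<in> centre lact ract"
  shows "derivation lact ract D"
proof -
  note sad = assms(1) and bm = assms(2) and jd = assms(3) and cb = assms(4) and cen = assms(5)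
  note bmf3 = bmf[OF bm] lr_lin[OF bm]
  note Dl = D_add[OF bm jd cen] D_scale[OF bm jd cen]
  obtain KD where KD: "\<forall>y. norm (D y) \<le> KD * norm y" using cb unfolding cbounded_def by blast
  obtain Km where Km: "Km > 0" "\<forall>a x. norm (lact a x) \<le> Km * norm a * norm x \<and> norm (ract x a) \<le> Km * norm x * norm a"
    using bm_bound[OF bm] by blast
  have KD': "norm (D y) \<le> \<bar>KD\<bar> * norm y" for y
  proof -
    have "norm (D y) \<le> KD * norm y" using KD by blast
    also have "\<dots> \<le> \<bar>KD\<bar> * norm y" by (intro mult_right_mono) auto
    finally show ?thesis .
  qed
  have E0: "EE lact D x b = 0" for x b
  proof -
    define d where "d = (\<lambda>x. EE lact D x b)"
    have d_add: "d (x + y) = d x + d y" for x y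
      unfolding d_def EE_def by (simp add: distrib_right Dl bmf3 algebra_simps)
    have d_scale: "d (scaleC c x) = scaleC c (d x)" for c x
      unfolding d_def EE_def by (simp add: scaleC_left_mult Dl bmf3 scaleC_diff_right)
    have d_bnd: "\<exists>Kd. \<forall>x. norm (d x) \<le> Kd * norm x"
    proof (intro exI allI)
      fix x
      have "norm (d x) \<le> norm (D (x * b)) + norm (lact b (D x)) + norm (lact x (D b))"
        unfolding d_def EE_def by (meson norm_triangle_ineq4 add_mono order_trans order_refl)
      also have "\<dots> \<le> \<bar>KD\<bar> * (norm x * norm b) + Km * norm b * (\<bar>KD\<bar> * norm x) + Km * norm x * norm (D b)"
      proof (intro add_mono)
        show "norm (D (x * b)) \<le> \<bar>KD\<bar> * (norm x * norm b)"
          using KD'[of "x * b"] norm_mult_ineq[of x b] by (meson abs_ge_zero mult_left_mono order_trans)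
        have "norm (lact b (D x)) \<le> Km * norm b * norm (D x)" using Km(2) by blast
        also have "\<dots> \<le> Km * norm b * (\<bar>KD\<bar> * norm x)" using Km(1) KD'[of x] by (intro mult_left_mono) auto
        finally show "norm (lact b (D x)) \<le> Km * norm b * (\<bar>KD\<bar> * norm x)" .
        show "norm (lact x (D b)) \<le> Km * norm x * norm (D b)" using Km(2) by blast
      qed
      also have "\<dots> = (\<bar>KD\<bar> * norm b + Km * norm b * \<bar>KD\<bar> + Km * norm (D b)) * norm x"
        by (simp add: algebra_simps)
      finally show "norm (d x) \<le> (\<bar>KD\<bar> * norm b + Km * norm b * \<bar>KD\<bar> + Km * norm (D b)) * norm x" .
    qed
    have d_cen: "d x \<in> centre lact ract" for x unfolding d_def by (rule E_cent[OF bm jd cen])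
    have d_der: "d (x * y) = ract (d x) y + lact x (d y)" for x y
      unfolding d_def by (rule E_der[OF bm jd cen])
    have "d x = 0" by (rule d_zero[OF bm d_add d_scale d_bnd d_cen d_der sad])
    then show ?thesis by (simp add: d_def)
  qed
  show ?thesis unfolding derivation_def
  proof (intro conjI allI)
    show "clinear D" using jd unfolding jordan_derivation_def by blast
    fix a b
    have "D (a * b) = lact b (D a) + lact a (D b)"
      using E0[of a b] unfolding EE_def by (simp add: algebra_simps)
    then show "D (a * b) = ract (D a) b + lact a (D b)" by (simp add: cenD[OF bm jd cen])
  qed
qed

end
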